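(* Let $a$, $b$ and $d>1$ be pairwise coprime odd positive integers and let $\beta\geq 2$ be an integer. Then there exists a positive integer $k$ with $2^\beta d\mid(a^k+b^k)$ if and only if $2^\beta\mid(a+b)$ and $2\,\|\,\operatorname{ord}_p(\frac ab)$ for every prime $p$ dividing $d$. In this case, $\operatorname{ord}_{2^\beta}(\frac ab)=2$ and $2\,\|\,\operatorname{ord}_{2^\beta d}(\frac ab)$.
   Context: For $n$ coprime to $ab$, $\operatorname{ord}_n(\frac ab)$ denotes the multiplicative order of $ab^{-1}$ modulo $n$. $2\,\|\,m$ means $2\mid m$ and $4\nmid m$. *)

theory Defs
  imports "HOL-Number_Theory.Number_Theory"
begin

definition ord_frac :: "nat \<Rightarrow> nat \<Rightarrow> nat \<Rightarrow> nat" where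
  "ord_frac n a b = ord n (a * modular_inverse n b)"

definition exactly_two_dvd :: "nat \<Rightarrow> bool" where
  "exactly_two_dvd m \<longleftrightarrow> 2 dvd m \<and> \<not> 4 dvd m"

end

theory Submission
  imports Defs
begin


lemma cong_int_one: "[int m = 1] (mod int n) \<longleftrightarrow> [m = 1] (mod n)"
  by (metis cong_int_iff of_nat_1)

lemma ord_int_nat: "ord (int n) (int x) = ord n x"
  unfolding ord_def
  by (simp add: cong_int_one flip: of_nat_power)

lemma ord_frac_eq:
  assumes "n > 0" "coprime b n" "[b * B = 1] (mod n)"
  shows "ord_frac n a b = ord n (a * B)"
proof -
  define I where "I = modular_inverse (int n) (int b)"
  have I0: "I \<ge> 0" unfolding I_def using assms(1) by (simp add: modular_inverse_int_nonneg)
  have cop: "coprime (int b) (int n)" using assms(2) by simp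
  have hI: "[int b * I = 1] (mod int n)" unfolding I_def by (rule cong_modular_inverse1[OF cop])
  have hB: "[int b * int B = 1] (mod int n)" using assms(3)
    by (metis cong_int_iff of_nat_1 of_nat_mult)
  have "[I * 1 = I * (int b * int B)] (mod int n)" using hB by (intro cong_mult cong_refl) (simp add: cong_sym)
  also have "I * (int b * int B) = (int b * I) * int B" by simp
  also have "[(int b * I) * int B = 1 * int B] (mod int n)" using hI by (intro cong_mult cong_refl)
  finally have "[I = int B] (mod int n)" by simp
  hence "[int a * I = int a * int B] (mod int n)" by (intro cong_mult cong_refl)
  hence "ord (int n) (int a * I) = ord (int n) (int (a * B))" by (simp add: ord_cong)
  thus ?thesis unfolding ord_frac_def I_def[symmetric] by (simp add: ord_int_nat del: of_nat_mult)
qed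



lemma odd_sum_odd_terms:
  fixes f :: "nat \<Rightarrow> int"
  assumes "\<And>i. odd (f i)"
  shows "odd (\<Sum>i<k. f i) \<longleftrightarrow> odd k"
  by (induction k) (use assms in auto)

lemma fwd_two:
  fixes c :: nat
  assumes "odd c" "2 \<le> \<beta>" "2^\<beta> dvd c^k + 1" "k > 0"
  shows "odd k \<and> 2^\<beta> dvd c + 1"
proof -
  have "(4::nat) dvd 2^\<beta>" using assms(2)
    by (metis le_imp_power_dvd power2_eq_square numeral_Bit0 mult_2 numeral_times_numeral semiring_norm(12) num_double power_mult) 
  hence d4: "4 dvd c^k + 1" using assms(3) by (rule dvd_trans)
  have ok: "odd k"
  proof
    assume "even k"
    then obtain j where j: "k = 2 * j" by blast
    have "odd (c^j)" using assms(1) by simp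
    hence "[(c^j)^2 = 1] (mod 8)" by (rule square_mod_8_eq_1_iff[THEN iffD2])
    hence "[c^k = 1] (mod 8)" unfolding j by (simp add: power_mult mult.commute)
    hence "[c^k = 1] (mod 4)" by (rule cong_dvd_modulus_nat) simp
    hence "[c^k + 1 = 2] (mod 4)" using cong_add[OF _ cong_refl, of "c^k" 1 4 1] by (simp add: numeral_2_eq_2)
    with d4 have "(4::nat) dvd 2" by (metis cong_dvd_iff)
    thus False by simp
  qed
  define S where "S = (\<Sum>i<k. (- int c)^i)"
  have "1 - (- int c)^k = (1 - (- int c)) * S" unfolding S_def by (rule one_diff_power_eq)
  hence eq: "int (c^k + 1) = int (c + 1) * S" using ok by simp
  have "odd S" unfolding S_def using ok assms(1)
    by (subst odd_sum_odd_terms) auto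
  hence cop: "coprime (2^\<beta>) S" by simp
  have "int (2^\<beta>) dvd int (c + 1) * S" using assms(3) eq by (metis of_nat_dvd_iff)
  hence "int (2^\<beta>) dvd int (c + 1)" using cop by (simp add: coprime_dvd_mult_left_iff)
  hence "2^\<beta> dvd c + 1" by (metis of_nat_dvd_iff)
  with ok show ?thesis by simp
qed

lemma ord_exact:
  fixes c n :: nat
  assumes "n dvd c^k + 1" "odd k" "\<not> n dvd 2"
  shows "exactly_two_dvd (ord n c)"
proof -
  define m where "m = ord n c"
  define X where "X = int c ^ k"
  have "int n dvd int (c^k + 1)" using assms(1) by (simp only: of_nat_dvd_iff)
  hence h1: "int n dvd X + 1" unfolding X_def by (simp add: add.commute)
  hence "int n dvd (X + 1) * (X - 1)" by (rule dvd_mult2)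
  moreover have "int c ^ (2*k) = X * X" unfolding X_def
    by (simp add: power_mult mult.commute[of 2 k] power2_eq_square)
  hence "(X + 1) * (X - 1) = int c ^ (2*k) - 1" by (simp add: algebra_simps)
  ultimately have "int n dvd int c ^ (2*k) - 1" by simp
  hence "[int c ^ (2*k) = 1] (mod int n)" by (simp add: cong_iff_dvd_diff)
  hence "[int (c ^ (2*k)) = int 1] (mod int n)" by simp
  hence "[c^(2*k) = 1] (mod n)" by (simp only: cong_int_iff)
  hence o2k: "m dvd 2*k" unfolding m_def by (simp add: ord_divides')
  have nok: "\<not> m dvd k"
  proof
    assume "m dvd k"
    hence "[c^k = 1] (mod n)" unfolding m_def by (simp add: ord_divides')
    hence "[int (c^k) = int 1] (mod int n)" by (simp only: cong_int_iff)
    hence "int n dvd X - 1" unfolding X_def by (simp add: cong_iff_dvd_diff)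
    with h1 have "int n dvd (X + 1) - (X - 1)" by (rule dvd_diff)
    hence "int n dvd int 2" by simp
    hence "n dvd 2" by (simp only: of_nat_dvd_iff)
    with assms(3) show False by simp
  qed
  have "even m"
  proof (rule ccontr)
    assume "odd m"
    hence "coprime m 2" by simp
    with o2k have "m dvd k" using coprime_dvd_mult_right_iff[of m 2 k] by simp
    with nok show False by simp
  qed
  moreover have "\<not> 4 dvd m"
  proof
    assume "4 dvd m"
    hence "4 dvd 2 * k" using o2k by (rule dvd_trans)
    hence "even k" by auto
    with assms(2) show False by simp
  qed
  ultimately show ?thesis unfolding exactly_two_dvd_def m_def by simp
qed



lemma lift_pow:
  fixes x :: int
  shows "n > 0 \<Longrightarrow> (\<forall>p. prime p \<and> p dvd n \<longrightarrow> int p dvd x - 1) \<Longrightarrow> int n dvd x^n - 1"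
proof (induction n rule: less_induct)
  case (less n)
  show ?case
  proof (cases "n = 1")
    case True thus ?thesis by simp
  next
    case False
    then obtain p where p: "prime p" "p dvd n" using prime_factor_nat by blast
    then obtain m where nm: "n = p * m" by blast
    have p2: "p \<ge> 2" using p(1) by (simp add: prime_ge_2_nat)
    have m0: "m > 0" using less.prems(1) nm by (cases "m = 0") auto
    have mn: "m < n" using nm p2 m0 by simp
    have "int m dvd x^m - 1"
      using less.IH[OF mn m0] less.prems(2) nm by auto
    define y where "y = x^m"
    have "[x = 1] (mod int p)" using less.prems(2) p by (simp add: cong_iff_dvd_diff)
    hence "[y = 1] (mod int p)" unfolding y_def using cong_pow by fastforce
    hence "[(\<Sum>i<p. y^i) = (\<Sum>i<p. 1)] (mod int p)"
      by (intro cong_sum) (metis cong_pow power_one)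
    hence "[(\<Sum>i<p. y^i) = int p] (mod int p)" by simp
    moreover have "[int p = 0] (mod int p)" by (simp add: cong_0_iff)
    ultimately have "[(\<Sum>i<p. y^i) = 0] (mod int p)" by (rule cong_trans)
    hence "int p dvd (\<Sum>i<p. y^i)" by (simp add: cong_0_iff)
    with \<open>int m dvd x^m - 1\<close> have "int m * int p dvd (y - 1) * (\<Sum>i<p. y^i)"
      unfolding y_def by (rule mult_dvd_mono)
    also have "(y - 1) * (\<Sum>i<p. y^i) = y^p - 1" by (simp add: power_diff_1_eq)
    also have "y^p = x^n" unfolding y_def nm by (simp add: power_mult mult.commute[of p m])
    finally show ?thesis using nm by (simp add: mult.commute)
  qed
qed

lemma conv:
  fixes c d \<beta> :: nat
  assumes "odd d" "2^\<beta> dvd c+1"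
    "\<forall>p. prime p \<and> p dvd d \<longrightarrow> exactly_two_dvd (ord p c)"
  shows "\<exists>k>0. 2^\<beta>*d dvd c^k+1"
proof -
  have d0: "d > 0" using assms(1) by (cases d) auto
  have A: "odd (ord p c div 2) \<and> int p dvd int c ^ (ord p c div 2) + 1"
    if p: "prime p" "p dvd d" for p
  proof -
    define m where "m = ord p c"
    define t where "t = m div 2"
    have e: "even m" "\<not> 4 dvd m" using assms(3) p unfolding exactly_two_dvd_def m_def by auto
    have mt: "m = 2 * t" unfolding t_def using e(1) by simp
    have todd: "odd t" using e mt by auto
    hence t0: "t > 0" by (cases t) auto
    have tm: "t < m" using mt t0 by simp
    have "[c^m = 1] (mod p)" unfolding m_def by (rule ord)
    hence "[int (c^m) = int 1] (mod int p)" by (simp only: cong_int_iff)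
    hence "int p dvd int c ^ m - 1" by (simp add: cong_iff_dvd_diff)
    also have "int c ^ m - 1 = (int c ^ t - 1) * (int c ^ t + 1)"
      unfolding mt by (simp add: power_mult mult.commute[of 2 t] power2_eq_square algebra_simps)
    finally have "int p dvd (int c ^ t - 1) * (int c ^ t + 1)" .
    moreover have "prime (int p)" using p(1) by simp
    ultimately have "int p dvd int c ^ t - 1 \<or> int p dvd int c ^ t + 1"
      using prime_dvd_mult_iff by blast
    moreover have "\<not> int p dvd int c ^ t - 1"
    proof
      assume "int p dvd int c ^ t - 1"
      hence "[int (c^t) = int 1] (mod int p)" by (simp add: cong_iff_dvd_diff)
      hence "[c^t = 1] (mod p)" by (simp only: cong_int_iff)
      with ord_minimal[OF t0 tm[unfolded m_def]] show False by simp
    qed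
    ultimately show ?thesis using todd unfolding t_def m_def by simp
  qed
  define P where "P = prime_factors d"
  define T where "T = (\<Prod>p\<in>P. ord p c div 2)"
  have Todd: "odd T" unfolding T_def P_def
    using A by (auto simp: even_prod_iff in_prime_factors_iff)
  have B: "int p dvd int c ^ T + 1" if p: "prime p" "p dvd d" for p
  proof -
    have pP: "p \<in> P" unfolding P_def using p d0 by (simp add: in_prime_factors_iff)
    have "ord p c div 2 dvd T" unfolding T_def P_def
      by (rule dvd_prodI) (use pP P_def in auto)
    then obtain r where r: "T = (ord p c div 2) * r" by blast
    have "odd r" using Todd r by simp
    have "[int c ^ (ord p c div 2) = -1] (mod int p)"
      using A[OF p] by (simp add: cong_iff_dvd_diff)
    hence "[(int c ^ (ord p c div 2))^r = (-1)^r] (mod int p)" by (rule cong_pow)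
    hence "[int c ^ T = -1] (mod int p)" using \<open>odd r\<close> r by (simp add: power_mult)
    thus ?thesis by (simp add: cong_iff_dvd_diff)
  qed
  define x where "x = - (int c ^ T)"
  have "int d dvd x^d - 1"
  proof (rule lift_pow[OF d0], intro allI impI)
    fix p assume "prime p \<and> p dvd d"
    hence "int p dvd int c ^ T + 1" using B by blast
    hence "int p dvd - (int c ^ T + 1)" by (simp only: dvd_minus_iff)
    moreover have "- (int c ^ T + 1) = x - 1" unfolding x_def by simp
    ultimately show "int p dvd x - 1" by simp
  qed
  also have "x^d - 1 = - (int c ^ (T*d) + 1)" unfolding x_def
    using assms(1) by (simp add: power_minus_odd power_mult)
  finally have "int d dvd - (int c ^ (T*d) + 1)" .
  hence Dd: "int d dvd int c ^ (T*d) + 1" by (simp only: dvd_minus_iff)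
  have "int (2^\<beta>) dvd int (c + 1)" using assms(2) by (simp only: of_nat_dvd_iff)
  hence "[int c = -1] (mod int (2^\<beta>))"
    by (simp add: cong_iff_dvd_diff add.commute)
  hence "[int c ^ (T*d) = (-1)^(T*d)] (mod int (2^\<beta>))" by (rule cong_pow)
  hence "int (2^\<beta>) dvd int c ^ (T*d) + 1" using Todd assms(1) by (simp add: cong_iff_dvd_diff)
  moreover have "coprime (int (2^\<beta>)) (int d)" using assms(1) by simp
  ultimately have "int (2^\<beta>) * int d dvd int c ^ (T*d) + 1" using Dd by (intro divides_mult) auto
  hence "int (2^\<beta> * d) dvd int (c ^ (T*d) + 1)" by (simp add: add.commute)
  hence "2^\<beta> * d dvd c ^ (T*d) + 1" by (simp only: of_nat_dvd_iff)
  moreover have "T * d > 0" using Todd d0 by (cases T) auto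
  ultimately show ?thesis by blast
qed


lemma coprime_dvd_N:
  fixes b N n :: nat
  assumes "coprime b N" "n dvd N" shows "coprime b n"
  using assms by (meson coprime_divisors dvd_refl)

theorem proposition2p7:
  fixes a b d \<beta> :: nat
  assumes "a > 0" "b > 0" "d > 1"
    and "odd a" "odd b" "odd d"
    and "coprime a b" "coprime a d" "coprime b d"
    and "\<beta> \<ge> 2"
  shows "((\<exists>k>0. 2 ^ \<beta> * d dvd a ^ k + b ^ k) \<longleftrightarrow>
           (2 ^ \<beta> dvd a + b \<and>
            (\<forall>p. prime p \<and> p dvd d \<longrightarrow> exactly_two_dvd (ord_frac p a b))))
       \<and> ((\<exists>k>0. 2 ^ \<beta> * d dvd a ^ k + b ^ k) \<longrightarrow>
           ord_frac (2 ^ \<beta>) a b = 2 \<and> exactly_two_dvd (ord_frac (2 ^ \<beta> * d) a b))"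
proof -
  define N where "N = 2 ^ \<beta> * d"
  have N0: "N > 0" unfolding N_def using assms(3) by simp
  have cbN: "coprime b N" unfolding N_def using assms(5,9) by simp
  define I where "I = modular_inverse (int N) (int b)"
  have I0: "I \<ge> 0" unfolding I_def using N0 by (simp add: modular_inverse_int_nonneg)
  have "[int b * I = 1] (mod int N)" unfolding I_def
    by (rule cong_modular_inverse1) (use cbN in simp)
  moreover have "int b * I = int (b * nat I)" using I0 by simp
  ultimately have "[int (b * nat I) = int 1] (mod int N)" by simp
  hence hB: "[b * nat I = 1] (mod N)" by (simp only: cong_int_iff)
  define B where "B = nat I"
  define c where "c = a * B"
  have hBn: "[b * B = 1] (mod n)" if "n dvd N" for n
    using hB that unfolding B_def by (rule cong_dvd_modulus_nat)
  have ordeq: "ord_frac n a b = ord n c" if "n dvd N" for n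
  proof -
    have "n > 0" using that N0 by (cases n) auto
    thus ?thesis unfolding c_def
      by (rule ord_frac_eq) (use coprime_dvd_N[OF cbN that] hBn[OF that] in auto)
  qed
  have key: "n dvd a^k + b^k \<longleftrightarrow> n dvd c^k + 1" if "n dvd N" for n k
  proof -
    have "[(b*B)^k = 1^k] (mod n)" using hBn[OF that] by (rule cong_pow)
    hence "[(b*B)^k * a^k + b^k = 1 * a^k + b^k] (mod n)" by (intro cong_add cong_mult cong_refl) simp
    moreover have "(b*B)^k * a^k + b^k = b^k * (c^k + 1)" unfolding c_def by (simp add: power_mult_distrib algebra_simps)
    ultimately have "[b^k * (c^k + 1) = a^k + b^k] (mod n)" by simp
    hence "n dvd a^k + b^k \<longleftrightarrow> n dvd b^k * (c^k + 1)" using cong_dvd_iff by blast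
    moreover have "coprime n (b^k)" using coprime_dvd_N[OF cbN that] by (simp add: coprime_commute)
    hence "n dvd b^k * (c^k + 1) \<longleftrightarrow> n dvd c^k + 1" by (rule coprime_dvd_mult_right_iff)
    ultimately show ?thesis by (simp only:)
  qed
  have "odd B"
  proof
    assume "even B"
    hence "even (b * B)" by simp
    moreover have "[b * B = 1] (mod 2)" using hBn[of 2] unfolding N_def using assms(10)
      by (simp add: dvd_power)
    ultimately show False by (simp add: cong_def)
  qed
  hence codd: "odd c" unfolding c_def using assms(4) by simp
  have dN: "d dvd N" unfolding N_def by simp
  have tN: "2^\<beta> dvd N" unfolding N_def by simp
  have four: "(4::nat) dvd 2^\<beta>" using assms(10) le_imp_power_dvd[of 2 \<beta> 2] by simp
  have E: "(\<exists>k>0. N dvd a^k + b^k) \<longleftrightarrow> (\<exists>k>0. N dvd c^k + 1)" using key[of N] by simp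
  have pd: "p dvd N \<and> \<not> p dvd 2" if "prime p" "p dvd d" for p
  proof
    show "p dvd N" using that dN by (meson dvd_trans)
    show "\<not> p dvd 2"
    proof
      assume "p dvd 2"
      hence "p = 2" using that(1) by (metis prime_nat_iff dvd_refl numeral_2_eq_2 prime_gt_1_nat nat_dvd_not_less not_less_iff_gr_or_eq zero_less_numeral dvd_imp_le le_antisym prime_ge_2_nat)
      with that(2) assms(6) show False by simp
    qed
  qed
  have fwd: "2^\<beta> dvd c + 1 \<and> (\<forall>p. prime p \<and> p dvd d \<longrightarrow> exactly_two_dvd (ord p c)) \<and>
     ord (2^\<beta>) c = 2 \<and> exactly_two_dvd (ord N c)"
    if "k > 0" "N dvd c^k + 1" for k
  proof -
    have "2^\<beta> dvd c^k + 1" using tN that(2) by (rule dvd_trans)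
    with fwd_two[OF codd assms(10) _ that(1)] have ok: "odd k" and h2: "2^\<beta> dvd c + 1" by auto
    have P: "\<forall>p. prime p \<and> p dvd d \<longrightarrow> exactly_two_dvd (ord p c)"
    proof (intro allI impI)
      fix p assume p: "prime p \<and> p dvd d"
      hence "p dvd c^k + 1" using pd that(2) by (meson dvd_trans)
      thus "exactly_two_dvd (ord p c)" using ord_exact ok pd p by blast
    qed
    have "\<not> N dvd 2"
    proof
      assume "N dvd 2"
      hence "4 dvd (2::nat)" using four tN by (meson dvd_trans)
      thus False by simp
    qed
    hence O: "exactly_two_dvd (ord N c)" using ord_exact[OF that(2) ok] by blast
    have ic: "int (2^\<beta>) dvd int c + 1" using h2 by (metis of_nat_dvd_iff of_nat_1 of_nat_add)
    have "[c^2 = 1] (mod 2^\<beta>)"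
    proof -
      have "int (2^\<beta>) dvd (int c + 1) * (int c - 1)" using ic by (rule dvd_mult2)
      also have "(int c + 1) * (int c - 1) = int (c^2) - int 1" by (simp add: power2_eq_square algebra_simps)
      finally have "[int (c^2) = int 1] (mod int (2^\<beta>))" by (simp only: cong_iff_dvd_diff)
      thus ?thesis by (simp only: cong_int_iff)
    qed
    moreover have "\<not> [c = 1] (mod 2^\<beta>)"
    proof
      assume "[c = 1] (mod 2^\<beta>)"
      hence "[int c = int 1] (mod int (2^\<beta>))" by (simp only: cong_int_iff)
      hence "int (2^\<beta>) dvd int c - 1" by (simp add: cong_iff_dvd_diff)
      with ic have "int (2^\<beta>) dvd (int c + 1) - (int c - 1)" by (rule dvd_diff)
      hence "int (2^\<beta>) dvd int 2" by simp
      hence "2^\<beta> dvd (2::nat)" by (simp only: of_nat_dvd_iff)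
      hence "4 dvd (2::nat)" using four by (meson dvd_trans)
      thus False by simp
    qed
    ultimately have "ord (2^\<beta>) c = 2" by (simp add: ord_eq_2_iff)
    with O P h2 show ?thesis by blast
  qed
  have R: "(2 ^ \<beta> dvd a + b \<and> (\<forall>p. prime p \<and> p dvd d \<longrightarrow> exactly_two_dvd (ord_frac p a b)))
     \<longleftrightarrow> (2 ^ \<beta> dvd c + 1 \<and> (\<forall>p. prime p \<and> p dvd d \<longrightarrow> exactly_two_dvd (ord p c)))"
    using key[OF tN, of 1] ordeq pd by auto
  have C: "(\<exists>k>0. N dvd c^k + 1) \<longleftrightarrow>
     (2 ^ \<beta> dvd c + 1 \<and> (\<forall>p. prime p \<and> p dvd d \<longrightarrow> exactly_two_dvd (ord p c)))"
    using fwd conv[OF assms(6)] unfolding N_def by blast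
  have D: "(\<exists>k>0. N dvd c^k + 1) \<longrightarrow> ord_frac (2 ^ \<beta>) a b = 2 \<and> exactly_two_dvd (ord_frac N a b)"
    using fwd ordeq[OF tN] ordeq[OF dvd_refl] by auto
  show ?thesis using E R C D unfolding N_def by blast
qed

end
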